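(* For integers $r,r^{\star},n$ with $1\le r^{\star}\le r<n$, there exist $X,Z\in\mathbb{R}^{n\times r}$ with $\mathrm{rank}(Z)=r^{\star}$ and $XX^{T}\ne ZZ^{T}$ such that $\delta(X,Z)\le1/(1+1/\sqrt{r-r^{\star}+1})$.
   Context: A linear map $\mathcal{A}:\mathbb{R}^{n\times n}\to\mathbb{R}^{m}$ satisfies $(\delta,p)$-RIP if $0\le\delta<1$ and there is $\nu>0$ such that $(1-\delta)\|E\|_{F}^{2}\le\frac{1}{\nu}\|\mathcal{A}(E)\|^{2}\le(1+\delta)\|E\|_{F}^{2}$ for all $E\in\mathbb{R}^{n\times n}$ with $\mathrm{rank}(E)\le p$. For $X,Z\in\mathbb{R}^{n\times r}$ with $XX^{T}\ne ZZ^{T}$ and $r^{\star}=\mathrm{rank}(Z)$, the threshold RIP function $\delta(X,Z)$ is the infimum of all $\delta$ for which there exist $m\ge1$ and a linear map $\mathcal{A}:\mathbb{R}^{n\times n}\to\mathbb{R}^{m}$ satisfying $(\delta,r+r^{\star})$-RIP such that the function $f_{\mathcal{A}}(U)=\|\mathcal{A}(UU^{T}-ZZ^{T})\|^{2}$ on $\mathbb{R}^{n\times r}$ satisfies $\nabla f_{\mathcal{A}}(X)=0$ and $\nabla^{2}f_{\mathcal{A}}(X)\succeq0$. *)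

theory Defs
  imports Complex_Main "HOL-Library.Extended_Real" "Jordan_Normal_Form.DL_Rank"
begin

definition sqnorm_vec :: "real vec \<Rightarrow> real" where
  "sqnorm_vec v = (\<Sum>i<dim_vec v. (v $ i)^2)"

definition sqfrob :: "real mat \<Rightarrow> real" where
  "sqfrob E = (\<Sum>i<dim_row E. \<Sum>j<dim_col E. (E $$ (i,j))^2)"

definition mrank :: "real mat \<Rightarrow> nat" where
  "mrank A = vec_space.rank (dim_row A) A"

definition linear_meas :: "nat \<Rightarrow> nat \<Rightarrow> (real mat \<Rightarrow> real vec) \<Rightarrow> bool" where
  "linear_meas n m A \<longleftrightarrow>
     (\<forall>E \<in> carrier_mat n n. A E \<in> carrier_vec m) \<and>
     (\<forall>E \<in> carrier_mat n n. \<forall>F \<in> carrier_mat n n. A (E + F) = A E + A F) \<and>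
     (\<forall>E \<in> carrier_mat n n. \<forall>c::real. A (c \<cdot>\<^sub>m E) = c \<cdot>\<^sub>v A E)"

definition RIP :: "nat \<Rightarrow> (real mat \<Rightarrow> real vec) \<Rightarrow> real \<Rightarrow> nat \<Rightarrow> bool" where
  "RIP n A \<delta> p \<longleftrightarrow> 0 \<le> \<delta> \<and> \<delta> < 1 \<and>
     (\<exists>\<nu>>0. \<forall>E \<in> carrier_mat n n. mrank E \<le> p \<longrightarrow>
        (1 - \<delta>) * sqfrob E \<le> sqnorm_vec (A E) / \<nu> \<and>
        sqnorm_vec (A E) / \<nu> \<le> (1 + \<delta>) * sqfrob E)"

definition fA :: "(real mat \<Rightarrow> real vec) \<Rightarrow> real mat \<Rightarrow> real mat \<Rightarrow> real" where
  "fA A Z U = sqnorm_vec (A (U * transpose_mat U - Z * transpose_mat Z))"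

(* second-order critical point of f_A at X on R^{n x r}: gradient zero and Hessian PSD,
   expressed via first and second directional derivatives along every direction V:
   phi' is the derivative of t |-> f(X+tV), phi'(0) = <grad f(X),V> = 0 and
   h = phi''(0) = Hess f(X)[V,V] >= 0 *)
definition sec_order_crit :: "nat \<Rightarrow> nat \<Rightarrow> (real mat \<Rightarrow> real vec) \<Rightarrow> real mat \<Rightarrow> real mat \<Rightarrow> bool" where
  "sec_order_crit n r A Z X \<longleftrightarrow>
     (\<forall>V \<in> carrier_mat n r. \<exists>\<phi>' h.
        (\<forall>t. ((\<lambda>s. fA A Z (X + s \<cdot>\<^sub>m V)) has_real_derivative \<phi>' t) (at t)) \<and>
        \<phi>' 0 = 0 \<and> (\<phi>' has_real_derivative h) (at 0) \<and> 0 \<le> h)"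

(* threshold RIP function delta(X,Z); infimum in the extended reals (Inf {} = \<infinity>) *)
definition thr_delta :: "nat \<Rightarrow> nat \<Rightarrow> real mat \<Rightarrow> real mat \<Rightarrow> ereal" where
  "thr_delta n r X Z = Inf (ereal ` {\<delta>. \<exists>m\<ge>1. \<exists>A. linear_meas n m A \<and>
        RIP n A \<delta> (r + mrank Z) \<and> sec_order_crit n r A Z X})"

end

theory Submission
  imports Defs
begin

lemma sum_flat:
  fixes g :: "nat \<Rightarrow> real"
  shows "(\<Sum>i<n*n. g i) = (\<Sum>a<n. \<Sum>b<n. g (a*n+b))"
proof -
  have "(\<Sum>i<n*n. g i) = (\<Sum>a<n. sum g {a*n..<a*n+n})" by (rule sum.nat_group[of g n n, symmetric])
  also have "... = (\<Sum>a<n. \<Sum>b<n. g (a*n+b))"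
  proof (rule sum.cong[OF refl])
    fix a
    have "{a*n..<a*n+n} = (\<lambda>b. a*n+b) ` {..<n}"
      using image_add_atLeastLessThan[of "a*n" 0 n] by (simp add: lessThan_atLeast0 add.commute)
    then show "sum g {a*n..<a*n+n} = (\<Sum>b<n. g (a*n+b))"
      by (simp add: sum.reindex)
  qed
  finally show ?thesis .
qed

definition sk :: "nat \<Rightarrow> real" where "sk k = sqrt (real k)"
definition dl :: "nat \<Rightarrow> real" where "dl k = sk k / (1 + sk k)"
definition trK :: "nat \<Rightarrow> real mat \<Rightarrow> real" where "trK k E = (\<Sum>a<k. E$$(a,a))"
definition cmpA :: "nat \<Rightarrow> nat \<Rightarrow> real mat \<Rightarrow> nat \<Rightarrow> nat \<Rightarrow> real" where
  "cmpA k r E a b = (if a \<noteq> b then sqrt (1 + dl k) * E$$(a,b)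
      else if a < k then E$$(a,a) - trK k E / real k else if a = r then 0 else E$$(a,a))"
definition Am :: "nat \<Rightarrow> nat \<Rightarrow> nat \<Rightarrow> real mat \<Rightarrow> real vec" where
  "Am n k r E = vec (n*n+2) (\<lambda>i. if i < n*n then cmpA k r E (i div n) (i mod n)
      else if i = n*n then sqrt ((1 + dl k)/2) * (trK k E / sk k + E$$(r,r))
      else sqrt ((1 - dl k)/2) * (trK k E / sk k - E$$(r,r)))"
definition Bf :: "nat \<Rightarrow> nat \<Rightarrow> nat \<Rightarrow> real mat \<Rightarrow> real mat \<Rightarrow> real" where
  "Bf n k r E Y = (\<Sum>a<n. \<Sum>b<n. (if a = b then 1 else 1 + dl k) * E$$(a,b) * Y$$(a,b))
     + dl k * (trK k E / sk k * Y$$(r,r) + E$$(r,r) * trK k Y / sk k)"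

lemma sk_pos: "1 \<le> k \<Longrightarrow> sk k > 0" by (simp add: sk_def)
lemma sk_sq: "sk k * sk k = real k" by (simp add: sk_def)
lemma dl_bounds: "1 \<le> k \<Longrightarrow> 0 < dl k \<and> dl k < 1"
  using sk_pos[of k] by (simp add: dl_def divide_simps)

lemma cmpA_prod:
  assumes "1 \<le> k"
  shows "cmpA k r E a b * cmpA k r Y a b = (if a = b then 1 else 1 + dl k) * E$$(a,b) * Y$$(a,b)
     + (if a = b then (if a < k then (E$$(a,a) - trK k E / k) * (Y$$(a,a) - trK k Y / k) - E$$(a,a)*Y$$(a,a)
         else if a = r then - E$$(a,a)*Y$$(a,a) else 0) else 0)"
proof -
  have "sqrt (1 + dl k) * sqrt (1 + dl k) = 1 + dl k" using dl_bounds[OF assms] by simp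
  then show ?thesis unfolding cmpA_def by (auto simp: algebra_simps)
qed

lemma inner_Am:
  assumes k1: "1 \<le> k" and kr: "k \<le> r" and rn: "r < n"
  shows "(\<Sum>i<n*n+2. Am n k r E $ i * Am n k r Y $ i) = Bf n k r E Y"
proof -
  define c where "c a b = (if a = b then 1 else 1 + dl k) * E$$(a,b) * Y$$(a,b)" for a b
  define corr where "corr a = (if a < k then (E$$(a,a) - trK k E / k) * (Y$$(a,a) - trK k Y / k) - E$$(a,a)*Y$$(a,a)
         else if a = r then - E$$(a,a)*Y$$(a,a) else 0)" for a
  have "(\<Sum>i<n*n. Am n k r E $ i * Am n k r Y $ i) = (\<Sum>a<n. \<Sum>b<n. Am n k r E $ (a*n+b) * Am n k r Y $ (a*n+b))"
    by (rule sum_flat)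
  also have "... = (\<Sum>a<n. \<Sum>b<n. cmpA k r E a b * cmpA k r Y a b)"
  proof (intro sum.cong refl)
    fix a b assume ab: "a \<in> {..<n}" "b \<in> {..<n}"
    have "a*n+b < a*n+n" using ab by simp
    also have "a*n+n = Suc a * n" by simp
    also have "Suc a * n \<le> n*n" using ab by (intro mult_le_mono1) simp
    finally have "a*n+b < n*n" .
    moreover have "(a*n+b) div n = a" "(a*n+b) mod n = b" using ab by auto
    ultimately show "Am n k r E $ (a*n+b) * Am n k r Y $ (a*n+b) = cmpA k r E a b * cmpA k r Y a b"
      unfolding Am_def by simp
  qed
  also have "... = (\<Sum>a<n. \<Sum>b<n. c a b + (if a = b then corr a else 0))"
    unfolding c_def corr_def using cmpA_prod[OF k1] by simp
  also have "... = (\<Sum>a<n. \<Sum>b<n. c a b) + (\<Sum>a<n. corr a)"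
    by (simp add: sum.distrib)
  finally have S1: "(\<Sum>i<n*n. Am n k r E $ i * Am n k r Y $ i) = (\<Sum>a<n. \<Sum>b<n. c a b) + (\<Sum>a<n. corr a)" .
  have kn: "k \<le> n" using kr rn by simp
  have "(\<Sum>a<n. corr a) = (\<Sum>a<k. corr a) + (\<Sum>a\<in>{k..<n}. corr a)"
    using sum.atLeastLessThan_concat[of 0 k n corr] kn by (simp add: lessThan_atLeast0)
  also have "(\<Sum>a\<in>{k..<n}. corr a) = - E$$(r,r)*Y$$(r,r)"
  proof -
    have "(\<Sum>a\<in>{k..<n}. corr a) = (\<Sum>a\<in>{k..<n}. if a = r then - E$$(r,r)*Y$$(r,r) else 0)"
      by (rule sum.cong) (auto simp: corr_def)
    also have "... = - E$$(r,r)*Y$$(r,r)" using kr rn by (simp add: sum.delta)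
    finally show ?thesis .
  qed
  also have "(\<Sum>a<k. corr a) = (\<Sum>a<k. (E$$(a,a) - trK k E / k) * (Y$$(a,a) - trK k Y / k) - E$$(a,a)*Y$$(a,a))"
    by (rule sum.cong) (auto simp: corr_def)
  also have "... = - trK k E * trK k Y / k"
  proof -
    have "(\<Sum>a<k. (E$$(a,a) - trK k E / k) * (Y$$(a,a) - trK k Y / k) - E$$(a,a)*Y$$(a,a))
       = (\<Sum>a<k. trK k E * trK k Y / (k*k) - E$$(a,a) * (trK k Y / k) - Y$$(a,a) * (trK k E / k))"
      by (rule sum.cong) (auto simp: algebra_simps)
    also have "... = k * (trK k E * trK k Y / (k*k)) - (\<Sum>a<k. E$$(a,a)) * (trK k Y / k) - (\<Sum>a<k. Y$$(a,a)) * (trK k E / k)"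
      by (simp add: sum_subtractf sum_distrib_right sum_divide_distrib)
    also have "... = - trK k E * trK k Y / k" using k1 by (simp add: field_simps trK_def)
    finally show ?thesis .
  qed
  finally have S2: "(\<Sum>a<n. corr a) = - trK k E * trK k Y / k - E$$(r,r)*Y$$(r,r)" by simp
  have q1: "sqrt ((1 + dl k)/2) * sqrt ((1 + dl k)/2) = (1 + dl k)/2" using dl_bounds[OF k1] by simp
  have q2: "sqrt ((1 - dl k)/2) * sqrt ((1 - dl k)/2) = (1 - dl k)/2" using dl_bounds[OF k1] by simp
  have nn: "n*n+2 = Suc (Suc (n*n))" by simp
  have "(\<Sum>i<n*n+2. Am n k r E $ i * Am n k r Y $ i) = (\<Sum>i<n*n. Am n k r E $ i * Am n k r Y $ i)
     + ((1 + dl k)/2) * (trK k E / sk k + E$$(r,r)) * (trK k Y / sk k + Y$$(r,r))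
     + ((1 - dl k)/2) * (trK k E / sk k - E$$(r,r)) * (trK k Y / sk k - Y$$(r,r))"
  proof -
    have "(\<Sum>i<n*n+2. Am n k r E $ i * Am n k r Y $ i) = (\<Sum>i<n*n. Am n k r E $ i * Am n k r Y $ i)
      + Am n k r E $ (n*n) * Am n k r Y $ (n*n) + Am n k r E $ (Suc (n*n)) * Am n k r Y $ (Suc (n*n))"
      unfolding nn by simp
    moreover have "Am n k r E $ (n*n) * Am n k r Y $ (n*n) = ((1 + dl k)/2) * (trK k E / sk k + E$$(r,r)) * (trK k Y / sk k + Y$$(r,r))"
    proof -
      have eE: "Am n k r E $ (n*n) = sqrt ((1 + dl k)/2) * (trK k E / sk k + E$$(r,r))" unfolding Am_def by simp
      have eY: "Am n k r Y $ (n*n) = sqrt ((1 + dl k)/2) * (trK k Y / sk k + Y$$(r,r))" unfolding Am_def by simp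
      have ac: "(s*x)*(s*y) = (s*s)*(x*y)" for s x y :: real by (simp add: algebra_simps)
      show ?thesis unfolding eE eY ac q1 by (simp add: mult.assoc)
    qed
    moreover have "Am n k r E $ (Suc (n*n)) * Am n k r Y $ (Suc (n*n)) = ((1 - dl k)/2) * (trK k E / sk k - E$$(r,r)) * (trK k Y / sk k - Y$$(r,r))"
    proof -
      have eE: "Am n k r E $ (Suc (n*n)) = sqrt ((1 - dl k)/2) * (trK k E / sk k - E$$(r,r))" unfolding Am_def by simp
      have eY: "Am n k r Y $ (Suc (n*n)) = sqrt ((1 - dl k)/2) * (trK k Y / sk k - Y$$(r,r))" unfolding Am_def by simp
      have ac: "(s*x)*(s*y) = (s*s)*(x*y)" for s x y :: real by (simp add: algebra_simps)
      show ?thesis unfolding eE eY ac q2 by (simp add: mult.assoc)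
    qed
    ultimately show ?thesis by simp
  qed
  also have "... = Bf n k r E Y"
  proof -
    have kk: "trK k E / sk k * (trK k Y / sk k) = trK k E * trK k Y / k"
      using sk_sq[of k] by (simp add: field_simps)
    have brk: "((1 + dl k)/2) * (trK k E / sk k + E$$(r,r)) * (trK k Y / sk k + Y$$(r,r))
       + ((1 - dl k)/2) * (trK k E / sk k - E$$(r,r)) * (trK k Y / sk k - Y$$(r,r))
       = trK k E / sk k * (trK k Y / sk k) + E$$(r,r) * Y$$(r,r) + dl k * (trK k E / sk k * Y$$(r,r) + E$$(r,r) * trK k Y / sk k)"
      by (simp add: algebra_simps add_divide_distrib diff_divide_distrib)
    have bf: "Bf n k r E Y = (\<Sum>a<n. \<Sum>b<n. c a b) + dl k * (trK k E / sk k * Y$$(r,r) + E$$(r,r) * trK k Y / sk k)"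
      unfolding Bf_def c_def by simp
    show ?thesis using S1 S2 brk bf kk by linarith
  qed
  finally show ?thesis .
qed


lemma trK_add: assumes "E \<in> carrier_mat n n" "F \<in> carrier_mat n n" "k \<le> n"
  shows "trK k (E + F) = trK k E + trK k F"
  unfolding trK_def using assms by (auto simp: sum.distrib intro!: sum.cong)

lemma trK_smult: assumes "E \<in> carrier_mat n n" "k \<le> n"
  shows "trK k (c \<cdot>\<^sub>m E) = c * trK k E"
  unfolding trK_def using assms by (auto simp: sum_distrib_left intro!: sum.cong)

lemma Am_add:
  assumes "E \<in> carrier_mat n n" "F \<in> carrier_mat n n" "k \<le> r" "r < n"
  shows "Am n k r (E + F) = Am n k r E + Am n k r F"
proof (rule eq_vecI)
  show "dim_vec (Am n k r (E + F)) = dim_vec (Am n k r E + Am n k r F)" by (simp add: Am_def)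
  fix i assume "i < dim_vec (Am n k r E + Am n k r F)"
  then have i: "i < n*n+2" by (simp add: Am_def)
  have tr: "trK k (E + F) = trK k E + trK k F" using trK_add assms by simp
  have n0: "0 < n" using assms by simp
  show "Am n k r (E + F) $ i = (Am n k r E + Am n k r F) $ i"
  proof (cases "i < n*n")
    case True
    then have ab: "i div n < n" "i mod n < n" using n0 by (auto simp: less_mult_imp_div_less)
    show ?thesis using True i ab assms
      by (simp add: Am_def cmpA_def tr algebra_simps add_divide_distrib)
  next
    case False
    then show ?thesis using i assms by (simp add: Am_def tr algebra_simps add_divide_distrib)
  qed
qed

lemma Am_smult:
  assumes "E \<in> carrier_mat n n" "k \<le> r" "r < n"
  shows "Am n k r (c \<cdot>\<^sub>m E) = c \<cdot>\<^sub>v Am n k r E"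
proof (rule eq_vecI)
  show "dim_vec (Am n k r (c \<cdot>\<^sub>m E)) = dim_vec (c \<cdot>\<^sub>v Am n k r E)" by (simp add: Am_def)
  fix i assume "i < dim_vec (c \<cdot>\<^sub>v Am n k r E)"
  then have i: "i < n*n+2" by (simp add: Am_def)
  have tr: "trK k (c \<cdot>\<^sub>m E) = c * trK k E" using trK_smult assms by simp
  have n0: "0 < n" using assms by simp
  show "Am n k r (c \<cdot>\<^sub>m E) $ i = (c \<cdot>\<^sub>v Am n k r E) $ i"
  proof (cases "i < n*n")
    case True
    then have ab: "i div n < n" "i mod n < n" using n0 by (auto simp: less_mult_imp_div_less)
    show ?thesis using True i ab assms
      by (simp add: Am_def cmpA_def tr algebra_simps)
  next
    case False
    then show ?thesis using i assms by (simp add: Am_def tr algebra_simps)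
  qed
qed

lemma Am_linear: assumes "k \<le> r" "r < n" shows "linear_meas n (n*n+2) (Am n k r)"
  unfolding linear_meas_def using Am_add[OF _ _ assms] Am_smult[OF _ assms]
  by (auto simp: Am_def)

lemma sqnorm_Am: assumes "1 \<le> k" "k \<le> r" "r < n"
  shows "sqnorm_vec (Am n k r E) = Bf n k r E E"
proof -
  have "sqnorm_vec (Am n k r E) = (\<Sum>i<n*n+2. Am n k r E $ i * Am n k r E $ i)"
    unfolding sqnorm_vec_def by (simp add: Am_def power2_eq_square)
  then show ?thesis using inner_Am[OF assms] by simp
qed

lemma cs_sum: fixes x :: "nat \<Rightarrow> real" assumes "1 \<le> k"
  shows "(\<Sum>a<k. x a)^2 / k \<le> (\<Sum>a<k. (x a)^2)"
proof -
  define m where "m = (\<Sum>a<k. x a) / k"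
  have "0 \<le> (\<Sum>a<k. (x a - m)^2)" by (simp add: sum_nonneg)
  also have "(\<Sum>a<k. (x a - m)^2) = (\<Sum>a<k. (x a)^2) - 2 * m * (\<Sum>a<k. x a) + k * m^2"
    by (simp add: power2_eq_square algebra_simps sum.distrib sum_subtractf sum_distrib_left)
  also have "... = (\<Sum>a<k. (x a)^2) - (\<Sum>a<k. x a)^2 / k"
    using assms by (simp add: m_def field_simps power2_eq_square)
  finally show ?thesis by simp
qed

lemma RIP_Am: assumes k1: "1 \<le> k" and kr: "k \<le> r" and rn: "r < n"
  shows "RIP n (Am n k r) (dl k) p"
  unfolding RIP_def
proof (intro conjI exI[of _ 1])
  show "0 \<le> dl k" "dl k < 1" using dl_bounds[OF k1] by auto
  show "0 < (1::real)" by simp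
  show "\<forall>E\<in>carrier_mat n n. mrank E \<le> p \<longrightarrow>
        (1 - dl k) * sqfrob E \<le> sqnorm_vec (Am n k r E) / 1 \<and> sqnorm_vec (Am n k r E) / 1 \<le> (1 + dl k) * sqfrob E"
  proof (intro ballI impI)
    fix E :: "real mat" assume E: "E \<in> carrier_mat n n"
    define S where "S = (\<Sum>a<n. \<Sum>b<n. E$$(a,b) * E$$(a,b))"
    define Off where "Off = (\<Sum>a<n. \<Sum>b<n. if a = b then 0 else E$$(a,b) * E$$(a,b))"
    define D where "D = (\<Sum>a<n. E$$(a,a) * E$$(a,a))"
    define x where "x = trK k E / sk k"
    define t where "t = E$$(r,r)"
    have sf: "sqfrob E = S" using E unfolding sqfrob_def S_def by (simp add: power2_eq_square)
    have SOD: "S = Off + D"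
    proof -
      have "S = (\<Sum>a<n. \<Sum>b<n. (if a = b then 0 else E$$(a,b) * E$$(a,b)) + (if a = b then E$$(a,b) * E$$(a,b) else 0))"
        unfolding S_def by (intro sum.cong refl) auto
      also have "... = Off + D" unfolding Off_def D_def by (simp add: sum.distrib)
      finally show ?thesis .
    qed
    have bf: "Bf n k r E E = S + dl k * Off + 2 * dl k * x * t"
    proof -
      have "(\<Sum>a<n. \<Sum>b<n. (if a = b then 1 else 1 + dl k) * E$$(a,b) * E$$(a,b)) = S + dl k * Off"
      proof -
        have "(\<Sum>a<n. \<Sum>b<n. (if a = b then 1 else 1 + dl k) * E$$(a,b) * E$$(a,b))
           = (\<Sum>a<n. \<Sum>b<n. E$$(a,b) * E$$(a,b) + dl k * (if a = b then 0 else E$$(a,b) * E$$(a,b)))"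
          by (intro sum.cong refl) (auto simp: algebra_simps)
        also have "... = S + dl k * Off" unfolding S_def Off_def by (simp add: sum.distrib sum_distrib_left)
        finally show ?thesis .
      qed
      then show ?thesis unfolding Bf_def x_def t_def by (simp add: algebra_simps)
    qed
    have Off0: "0 \<le> Off" unfolding Off_def by (intro sum_nonneg) auto
    have x2: "x^2 \<le> (\<Sum>a<k. (E$$(a,a))^2)"
    proof -
      have "x^2 = (trK k E)^2 / k" unfolding x_def using sk_sq[of k] by (simp add: power2_eq_square)
      then show ?thesis using cs_sum[OF k1, of "\<lambda>a. E$$(a,a)"] by (simp add: trK_def)
    qed
    have Dge: "(\<Sum>a<k. (E$$(a,a))^2) + t^2 \<le> D"
    proof -
      have kn: "k \<le> n" using kr rn by simp
      have "D = (\<Sum>a<k. E$$(a,a) * E$$(a,a)) + (\<Sum>a\<in>{k..<n}. E$$(a,a) * E$$(a,a))"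
        unfolding D_def using sum.atLeastLessThan_concat[of 0 k n "\<lambda>a. E$$(a,a) * E$$(a,a)"] kn
        by (simp add: lessThan_atLeast0)
      moreover have "E$$(r,r) * E$$(r,r) \<le> (\<Sum>a\<in>{k..<n}. E$$(a,a) * E$$(a,a))"
        using kr rn by (intro member_le_sum) auto
      ultimately show ?thesis unfolding t_def by (simp add: power2_eq_square)
    qed
    have xt: "\<bar>2 * x * t\<bar> \<le> x^2 + t^2"
    proof -
      have "0 \<le> (\<bar>x\<bar> - \<bar>t\<bar>)^2" by simp
      then show ?thesis by (simp add: power2_eq_square abs_mult algebra_simps)
    qed
    have dpos: "0 \<le> dl k" using dl_bounds[OF k1] by simp
    have xtD: "\<bar>2 * x * t\<bar> \<le> D" using xt x2 Dge by linarith
    have "dl k * (- D) \<le> dl k * (2 * x * t)" using xtD dpos by (intro mult_left_mono) auto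
    moreover have "dl k * (2 * x * t) \<le> dl k * D" using xtD dpos by (intro mult_left_mono) auto
    moreover have "0 \<le> dl k * Off" using Off0 dpos by simp
    ultimately show "(1 - dl k) * sqfrob E \<le> sqnorm_vec (Am n k r E) / 1 \<and> sqnorm_vec (Am n k r E) / 1 \<le> (1 + dl k) * sqfrob E"
      unfolding sf sqnorm_Am[OF k1 kr rn] bf SOD by (simp add: algebra_simps)
  qed
qed

lemma (in vec_space) coord_indpt:
  assumes S: "S \<subseteq> carrier_vec n"
    and co: "\<And>v. v \<in> S \<Longrightarrow> \<exists>i<n. v $ i \<noteq> 0 \<and> (\<forall>u\<in>S. u \<noteq> v \<longrightarrow> u $ i = 0)"
  shows "lin_indpt S"
proof
  assume "lin_dep S"
  from this[unfolded lin_dep_def] obtain A a v where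
    fin: "finite A" and A: "A \<subseteq> S" and lc: "lincomb a A = 0\<^sub>v n" and v: "v \<in> A" and av: "a v \<noteq> 0"
    by auto
  obtain i where i: "i < n" "v $ i \<noteq> 0" "\<forall>u\<in>S. u \<noteq> v \<longrightarrow> u $ i = 0" using co v A by blast
  have AC: "A \<subseteq> carrier_vec n" using A S by auto
  have "lincomb a A $ i = (\<Sum>x\<in>A. a x * x $ i)" using lincomb_index[OF i(1) AC] .
  also have "... = (\<Sum>x\<in>A. if x = v then a v * v $ i else 0)"
    using i(3) A by (intro sum.cong refl) auto
  also have "... = a v * v $ i" using fin v by (simp add: sum.delta)
  finally have "a v * v $ i = 0" using lc i(1) by simp
  then show False using av i(2) by simp
qed



definition Xm :: "nat \<Rightarrow> nat \<Rightarrow> real mat" where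
  "Xm n r = mat n r (\<lambda>(i,j). if i = j then 1 else 0)"
definition cz :: "nat \<Rightarrow> real" where "cz k = sqrt ((1 + sk k) / k)"
definition Zm :: "nat \<Rightarrow> nat \<Rightarrow> nat \<Rightarrow> real mat" where
  "Zm n k r = mat n r (\<lambda>(i,j). if k \<le> j then (if i = j then 1 else 0) else (if i = r then cz k else 0))"

lemma Xm_carrier[simp]: "Xm n r \<in> carrier_mat n r" by (simp add: Xm_def)
lemma Zm_carrier[simp]: "Zm n k r \<in> carrier_mat n r" by (simp add: Zm_def)
lemma Xm_dims[simp]: "dim_row (Xm n r) = n" "dim_col (Xm n r) = r" by (simp_all add: Xm_def)
lemma Zm_dims[simp]: "dim_row (Zm n k r) = n" "dim_col (Zm n k r) = r" by (simp_all add: Zm_def)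

lemma ABt_index:
  assumes A: "A \<in> carrier_mat n r" and B: "B \<in> carrier_mat n r" and ab: "a < n" "b < n"
  shows "(A * transpose_mat B) $$ (a,b) = (\<Sum>l<r. A$$(a,l) * B$$(b,l))"
proof -
  have "(A * transpose_mat B) $$ (a,b) = row A a \<bullet> col (transpose_mat B) b"
    using A B ab by simp
  also have "... = (\<Sum>l\<in>{0..<r}. row A a $ l * col (transpose_mat B) b $ l)"
    unfolding scalar_prod_def using B by simp
  also have "... = (\<Sum>l<r. A$$(a,l) * B$$(b,l))"
    by (rule sum.cong) (use A B ab in auto)
  finally show ?thesis .
qed

lemma XXt_index:
  assumes "a < n" "b < n"
  shows "(Xm n r * transpose_mat (Xm n r)) $$ (a,b) = (if a = b \<and> a < r then 1 else 0)"
proof -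
  have "(Xm n r * transpose_mat (Xm n r)) $$ (a,b) = (\<Sum>l<r. (if a = l then 1 else 0) * (if b = l then 1 else 0))"
    using ABt_index[OF Xm_carrier Xm_carrier assms] assms by (simp add: Xm_def)
  also have "... = (\<Sum>l<r. if l = a then (if a = b then 1 else 0) else 0)"
    by (intro sum.cong refl) auto
  also have "... = (if a = b \<and> a < r then 1 else 0)" by (simp add: sum.delta)
  finally show ?thesis .
qed

lemma ZZt_index:
  assumes k1: "1 \<le> k" and kr: "k \<le> r" and ab: "a < n" "b < n"
  shows "(Zm n k r * transpose_mat (Zm n k r)) $$ (a,b) =
     (if a = b \<and> k \<le> a \<and> a < r then 1 else 0) + (if a = r \<and> b = r then 1 + sk k else 0)"
proof -
  define z where "z i j = (if k \<le> j then (if i = j then 1 else 0) else (if i = r then cz k else 0))" for i j :: nat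
  have "(Zm n k r * transpose_mat (Zm n k r)) $$ (a,b) = (\<Sum>l<r. z a l * z b l)"
    using ABt_index[OF Zm_carrier Zm_carrier ab] ab by (simp add: Zm_def z_def)
  also have "... = (\<Sum>l<k. z a l * z b l) + (\<Sum>l\<in>{k..<r}. z a l * z b l)"
    using sum.atLeastLessThan_concat[of 0 k r "\<lambda>l. z a l * z b l"] kr by (simp add: lessThan_atLeast0)
  also have "(\<Sum>l<k. z a l * z b l) = (\<Sum>l<k. if a = r \<and> b = r then cz k * cz k else 0)"
    by (intro sum.cong refl) (auto simp: z_def)
  also have "... = (if a = r \<and> b = r then k * (cz k * cz k) else 0)" by simp
  also have "... = (if a = r \<and> b = r then 1 + sk k else 0)"
  proof -
    have "0 \<le> sk k" by (simp add: sk_def)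
    then have "cz k * cz k = (1 + sk k) / k" unfolding cz_def by simp
    then show ?thesis using k1 by simp
  qed
  also have "(\<Sum>l\<in>{k..<r}. z a l * z b l) = (\<Sum>l\<in>{k..<r}. if l = a then (if a = b then 1 else 0) else 0)"
    by (intro sum.cong refl) (auto simp: z_def)
  also have "... = (if a = b \<and> k \<le> a \<and> a < r then 1 else 0)" by (simp add: sum.delta)
  finally show ?thesis by simp
qed

definition em :: "nat \<Rightarrow> nat \<Rightarrow> nat \<Rightarrow> real mat" where
  "em n k r = Xm n r * transpose_mat (Xm n r) - Zm n k r * transpose_mat (Zm n k r)"

lemma em_carrier[simp]: "em n k r \<in> carrier_mat n n"
  unfolding em_def by (rule minus_carrier_mat, rule mult_carrier_mat[OF Zm_carrier]) simp

lemma em_index: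
  assumes k1: "1 \<le> k" and kr: "k \<le> r" and ab: "a < n" "b < n"
  shows "em n k r $$ (a,b) = (if a = b then (if a < k then 1 else if a = r then - (1 + sk k) else 0) else 0)"
proof -
  have "em n k r $$ (a,b) = (Xm n r * transpose_mat (Xm n r)) $$ (a,b) - (Zm n k r * transpose_mat (Zm n k r)) $$ (a,b)"
    unfolding em_def using ab by simp
  then show ?thesis using XXt_index[OF ab, of r] ZZt_index[OF k1 kr ab] ab kr by auto
qed

lemma Bf_em:
  assumes k1: "1 \<le> k" and kr: "k \<le> r" and rn: "r < n"
  shows "Bf n k r (em n k r) Y = - (1 + dl k) * Y$$(r,r)"
proof -
  let ?e = "em n k r"
  define mu where "mu = 1 + sk k"
  have kn: "k \<le> n" using kr rn by simp
  have split: "(\<Sum>a<n. g a) = (\<Sum>a<k. g a) + (\<Sum>a\<in>{k..<n}. g a)" for g :: "nat \<Rightarrow> real"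
    unfolding lessThan_atLeast0 using sum.atLeastLessThan_concat[of 0 k n g] kn by simp
  have "(\<Sum>a<n. \<Sum>b<n. (if a = b then 1 else 1 + dl k) * ?e$$(a,b) * Y$$(a,b))
      = (\<Sum>a<n. \<Sum>b<n. if b = a then (if a < k then Y$$(a,a) else if a = r then - mu * Y$$(a,a) else 0) else 0)"
    by (intro sum.cong refl) (auto simp: em_index[OF k1 kr] mu_def)
  also have "... = (\<Sum>a<n. (if a < k then Y$$(a,a) else if a = r then - mu * Y$$(a,a) else 0))"
    by (simp add: sum.delta)
  also have "... = (\<Sum>a<k. (if a < k then Y$$(a,a) else if a = r then - mu * Y$$(a,a) else 0))
       + (\<Sum>a\<in>{k..<n}. (if a < k then Y$$(a,a) else if a = r then - mu * Y$$(a,a) else 0))"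
    by (rule split)
  also have "(\<Sum>a<k. (if a < k then Y$$(a,a) else if a = r then - mu * Y$$(a,a) else 0)) = trK k Y"
    unfolding trK_def by (intro sum.cong refl) auto
  also have "(\<Sum>a\<in>{k..<n}. (if a < k then Y$$(a,a) else if a = r then - mu * Y$$(a,a) else 0))
      = (\<Sum>a\<in>{k..<n}. if a = r then - mu * Y$$(r,r) else 0)"
    by (intro sum.cong refl) auto
  also have "... = - mu * Y$$(r,r)" using kr rn by (simp add: sum.delta)
  finally have S: "(\<Sum>a<n. \<Sum>b<n. (if a = b then 1 else 1 + dl k) * ?e$$(a,b) * Y$$(a,b)) = trK k Y - mu * Y$$(r,r)" by simp
  have tr: "trK k ?e = k" unfolding trK_def using kr rn by (simp add: em_index[OF k1 kr])
  have err: "?e $$ (r,r) = - mu" using kr rn k1 by (simp add: em_index[OF k1 kr] mu_def)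
  have skp: "sk k > 0" using sk_pos[OF k1] .
  have sq: "sk k * sk k = k" by (rule sk_sq)
  have pp1: "0 < sk k + sk k * sk k" by (intro add_pos_pos mult_pos_pos skp)
  have pp2: "0 < 1 + sk k" by (intro add_pos_pos skp) simp
  have pp: "sk k + sk k * sk k \<noteq> 0" "1 + sk k \<noteq> 0" using pp1 pp2 by simp_all
  have "Bf n k r ?e Y = trK k Y - mu * Y$$(r,r) + dl k * (k / sk k * Y$$(r,r) + (- mu) * trK k Y / sk k)"
    unfolding Bf_def S tr err by simp
  also have "... = - (1 + dl k) * Y$$(r,r)"
    unfolding dl_def mu_def sq[symmetric] using skp pp
    by (simp add: field_simps, (simp add: algebra_simps)?)
  finally show ?thesis .
qed


lemma quad_deriv1:
  fixes \<alpha> \<beta> \<gamma> :: "nat \<Rightarrow> real"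
  shows "((\<lambda>s. \<Sum>i<m. (\<alpha> i + s*\<beta> i + s^2*\<gamma> i)^2) has_real_derivative
          (\<Sum>i<m. 2*(\<alpha> i + t*\<beta> i + t^2*\<gamma> i)*(\<beta> i + 2*t*\<gamma> i))) (at t)"
proof (rule DERIV_sum)
  fix i
  show "((\<lambda>s. (\<alpha> i + s*\<beta> i + s^2*\<gamma> i)^2) has_real_derivative
          2*(\<alpha> i + t*\<beta> i + t^2*\<gamma> i)*(\<beta> i + 2*t*\<gamma> i)) (at t)"
    by (auto intro!: derivative_eq_intros simp: algebra_simps power2_eq_square)
qed

lemma quad_deriv2:
  fixes \<alpha> \<beta> \<gamma> :: "nat \<Rightarrow> real"
  shows "((\<lambda>t. \<Sum>i<m. 2*(\<alpha> i + t*\<beta> i + t^2*\<gamma> i)*(\<beta> i + 2*t*\<gamma> i)) has_real_derivative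
          (\<Sum>i<m. 2*((\<beta> i)^2 + 2*\<alpha> i*\<gamma> i))) (at 0)"
proof (rule DERIV_sum)
  fix i
  show "((\<lambda>t. 2*(\<alpha> i + t*\<beta> i + t^2*\<gamma> i)*(\<beta> i + 2*t*\<gamma> i)) has_real_derivative
          2*((\<beta> i)^2 + 2*\<alpha> i*\<gamma> i)) (at 0)"
    by (auto intro!: derivative_eq_intros simp: algebra_simps power2_eq_square)
qed

lemma soc_intro:
  assumes "\<And>V. V \<in> carrier_mat n r \<Longrightarrow> \<exists>\<alpha> \<beta> \<gamma> :: nat \<Rightarrow> real.
     (\<forall>s. fA A Z (X + s \<cdot>\<^sub>m V) = (\<Sum>i<m. (\<alpha> i + s*\<beta> i + s^2*\<gamma> i)^2))
     \<and> (\<Sum>i<m. \<alpha> i * \<beta> i) = 0 \<and> 0 \<le> (\<Sum>i<m. (\<beta> i)^2 + 2*\<alpha> i*\<gamma> i)"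
  shows "sec_order_crit n r A Z X"
  unfolding sec_order_crit_def
proof (intro ballI)
  fix V :: "real mat" assume V: "V \<in> carrier_mat n r"
  obtain \<alpha> \<beta> \<gamma> :: "nat \<Rightarrow> real" where
    h1: "\<forall>s. fA A Z (X + s \<cdot>\<^sub>m V) = (\<Sum>i<m. (\<alpha> i + s*\<beta> i + s^2*\<gamma> i)^2)"
    and h2: "(\<Sum>i<m. \<alpha> i * \<beta> i) = 0" and h3: "0 \<le> (\<Sum>i<m. (\<beta> i)^2 + 2*\<alpha> i*\<gamma> i)"
    using assms[OF V] by blast
  define d where "d t = (\<Sum>i<m. 2*(\<alpha> i + t*\<beta> i + t^2*\<gamma> i)*(\<beta> i + 2*t*\<gamma> i))" for t
  define hh where "hh = (\<Sum>i<m. 2*((\<beta> i)^2 + 2*\<alpha> i*\<gamma> i))"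
  have f: "(\<lambda>s. fA A Z (X + s \<cdot>\<^sub>m V)) = (\<lambda>s. \<Sum>i<m. (\<alpha> i + s*\<beta> i + s^2*\<gamma> i)^2)"
    using h1 by auto
  have D1: "\<forall>t. ((\<lambda>s. fA A Z (X + s \<cdot>\<^sub>m V)) has_real_derivative d t) (at t)"
    unfolding f d_def using quad_deriv1 by blast
  have D0: "d 0 = 0"
  proof -
    have "d 0 = 2 * (\<Sum>i<m. \<alpha> i * \<beta> i)" unfolding d_def by (simp add: sum_distrib_left algebra_simps)
    then show ?thesis using h2 by simp
  qed
  have D2: "(d has_real_derivative hh) (at 0)"
    unfolding d_def[abs_def] hh_def by (rule quad_deriv2)
  have H: "0 \<le> hh"
  proof -
    have "hh = 2 * (\<Sum>i<m. (\<beta> i)^2 + 2*\<alpha> i*\<gamma> i)" unfolding hh_def by (simp add: sum_distrib_left)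
    then show ?thesis using h3 by simp
  qed
  show "\<exists>\<phi>' h. (\<forall>t. ((\<lambda>s. fA A Z (X + s \<cdot>\<^sub>m V)) has_real_derivative \<phi>' t) (at t)) \<and>
        \<phi>' 0 = 0 \<and> (\<phi>' has_real_derivative h) (at 0) \<and> 0 \<le> h"
    using D1 D0 D2 H by blast
qed

lemma sum_expand:
  fixes x y v w :: "nat \<Rightarrow> real"
  shows "(\<Sum>l<r. (x l + s*v l)*(y l + s*w l)) = (\<Sum>l<r. x l*y l) + s*((\<Sum>l<r. x l*w l) + (\<Sum>l<r. v l*y l)) + s^2*(\<Sum>l<r. v l*w l)"
  by (simp add: algebra_simps sum.distrib sum_distrib_left power2_eq_square)

lemma split_sum: fixes g :: "nat \<Rightarrow> real" assumes "m \<le> n"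
  shows "(\<Sum>a<n. g a) = (\<Sum>a<m. g a) + (\<Sum>a\<in>{m..<n}. g a)"
  unfolding lessThan_atLeast0 using sum.atLeastLessThan_concat[of 0 m n g] assms by simp

lemma Xm_index[simp]: "a < n \<Longrightarrow> l < r \<Longrightarrow> Xm n r $$ (a,l) = (if a = l then 1 else 0)"
  by (simp add: Xm_def)


lemma soc_main:
  assumes k1: "1 \<le> k" and kr: "k \<le> r" and rn: "r < n"
  shows "sec_order_crit n r (Am n k r) (Zm n k r) (Xm n r)"
proof (rule soc_intro[where m = "n*n+2"])
  fix V :: "real mat" assume V: "V \<in> carrier_mat n r"
  define X where "X = Xm n r"
  define Z where "Z = Zm n k r"
  define e where "e = em n k r"
  define L where "L = X * transpose_mat V + V * transpose_mat X"
  define W where "W = V * transpose_mat V"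
  have Xc: "X \<in> carrier_mat n r" and Zc: "Z \<in> carrier_mat n r" unfolding X_def Z_def by simp_all
  have ec: "e \<in> carrier_mat n n" unfolding e_def by simp
  have Lc: "L \<in> carrier_mat n n" unfolding L_def using Xc V
    by (intro add_carrier_mat mult_carrier_mat[of _ n r]) auto
  have Wc: "W \<in> carrier_mat n n" unfolding W_def using V by (intro mult_carrier_mat[of _ n r]) auto
  have Lidx: "L $$ (a,b) = (\<Sum>l<r. X$$(a,l) * V$$(b,l)) + (\<Sum>l<r. V$$(a,l) * X$$(b,l))"
    if "a < n" "b < n" for a b
  proof -
    have "L $$ (a,b) = (X * transpose_mat V) $$ (a,b) + (V * transpose_mat X) $$ (a,b)"
      unfolding L_def using that V Xc by simp
    then show ?thesis using ABt_index[OF Xc V that] ABt_index[OF V Xc that] by simp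
  qed
  have Widx: "W $$ (a,b) = (\<Sum>l<r. V$$(a,l) * V$$(b,l))" if "a < n" "b < n" for a b
    unfolding W_def using ABt_index[OF V V that] .
  have eidx: "e $$ (a,b) = (\<Sum>l<r. X$$(a,l) * X$$(b,l)) - (\<Sum>l<r. Z$$(a,l) * Z$$(b,l))"
    if "a < n" "b < n" for a b
  proof -
    have "e $$ (a,b) = (X * transpose_mat X) $$ (a,b) - (Z * transpose_mat Z) $$ (a,b)"
      unfolding e_def em_def X_def Z_def using that by simp
    then show ?thesis using ABt_index[OF Xc Xc that] ABt_index[OF Zc Zc that] by simp
  qed
  have matid: "(X + s \<cdot>\<^sub>m V) * transpose_mat (X + s \<cdot>\<^sub>m V) - Z * transpose_mat Z
      = e + s \<cdot>\<^sub>m L + (s^2) \<cdot>\<^sub>m W" for s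
  proof (rule eq_matI)
    have XV: "X + s \<cdot>\<^sub>m V \<in> carrier_mat n r" using V by simp
    show "dim_row ((X + s \<cdot>\<^sub>m V) * transpose_mat (X + s \<cdot>\<^sub>m V) - Z * transpose_mat Z) = dim_row (e + s \<cdot>\<^sub>m L + (s^2) \<cdot>\<^sub>m W)"
      using Zc Wc by simp
    show "dim_col ((X + s \<cdot>\<^sub>m V) * transpose_mat (X + s \<cdot>\<^sub>m V) - Z * transpose_mat Z) = dim_col (e + s \<cdot>\<^sub>m L + (s^2) \<cdot>\<^sub>m W)"
      using Zc Wc by simp
    fix a b assume "a < dim_row (e + s \<cdot>\<^sub>m L + (s^2) \<cdot>\<^sub>m W)" "b < dim_col (e + s \<cdot>\<^sub>m L + (s^2) \<cdot>\<^sub>m W)"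
    then have ab: "a < n" "b < n" using Wc by auto
    have "((X + s \<cdot>\<^sub>m V) * transpose_mat (X + s \<cdot>\<^sub>m V) - Z * transpose_mat Z) $$ (a,b)
        = ((X + s \<cdot>\<^sub>m V) * transpose_mat (X + s \<cdot>\<^sub>m V)) $$ (a,b) - (Z * transpose_mat Z) $$ (a,b)"
      using ab Zc by simp
    also have "... = (\<Sum>l<r. (X + s \<cdot>\<^sub>m V)$$(a,l) * (X + s \<cdot>\<^sub>m V)$$(b,l)) - (\<Sum>l<r. Z$$(a,l) * Z$$(b,l))"
      unfolding ABt_index[OF XV XV ab] ABt_index[OF Zc Zc ab] ..
    also have "(\<Sum>l<r. (X + s \<cdot>\<^sub>m V)$$(a,l) * (X + s \<cdot>\<^sub>m V)$$(b,l)) = (\<Sum>l<r. (X$$(a,l) + s * V$$(a,l)) * (X$$(b,l) + s * V$$(b,l)))"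
      using ab V by (intro sum.cong refl) auto
    also have "(\<Sum>l<r. (X$$(a,l) + s * V$$(a,l)) * (X$$(b,l) + s * V$$(b,l))) - (\<Sum>l<r. Z$$(a,l) * Z$$(b,l))
       = (e + s \<cdot>\<^sub>m L + (s^2) \<cdot>\<^sub>m W) $$ (a,b)"
      using ab ec Lc Wc eidx[OF ab] Lidx[OF ab] Widx[OF ab] sum_expand[of "\<lambda>l. X$$(a,l)" s "\<lambda>l. V$$(a,l)" "\<lambda>l. X$$(b,l)" "\<lambda>l. V$$(b,l)" r]
      by simp
    finally show "((X + s \<cdot>\<^sub>m V) * transpose_mat (X + s \<cdot>\<^sub>m V) - Z * transpose_mat Z) $$ (a,b) = (e + s \<cdot>\<^sub>m L + (s^2) \<cdot>\<^sub>m W) $$ (a,b)" .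
  qed
  have Aeq: "Am n k r (e + s \<cdot>\<^sub>m L + (s^2) \<cdot>\<^sub>m W) = Am n k r e + s \<cdot>\<^sub>v Am n k r L + (s^2) \<cdot>\<^sub>v Am n k r W" for s
  proof -
    have "Am n k r (e + s \<cdot>\<^sub>m L + (s^2) \<cdot>\<^sub>m W) = Am n k r (e + s \<cdot>\<^sub>m L) + Am n k r ((s^2) \<cdot>\<^sub>m W)"
      using ec Lc Wc kr rn by (intro Am_add) auto
    also have "Am n k r (e + s \<cdot>\<^sub>m L) = Am n k r e + Am n k r (s \<cdot>\<^sub>m L)"
      using ec Lc Wc kr rn by (intro Am_add) auto
    also have "Am n k r (s \<cdot>\<^sub>m L) = s \<cdot>\<^sub>v Am n k r L" using Lc kr rn by (intro Am_smult)
    also have "Am n k r ((s^2) \<cdot>\<^sub>m W) = (s^2) \<cdot>\<^sub>v Am n k r W" using Wc kr rn by (intro Am_smult)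
    finally show ?thesis .
  qed
  define \<alpha> where "\<alpha> i = Am n k r e $ i" for i
  define \<beta> where "\<beta> i = Am n k r L $ i" for i
  define \<gamma> where "\<gamma> i = Am n k r W $ i" for i
  have fAeq: "fA (Am n k r) (Zm n k r) (Xm n r + s \<cdot>\<^sub>m V) = (\<Sum>i<n*n+2. (\<alpha> i + s*\<beta> i + s^2*\<gamma> i)^2)" for s
  proof -
    have "fA (Am n k r) (Zm n k r) (Xm n r + s \<cdot>\<^sub>m V) = sqnorm_vec (Am n k r e + s \<cdot>\<^sub>v Am n k r L + (s^2) \<cdot>\<^sub>v Am n k r W)"
      unfolding fA_def X_def[symmetric] Z_def[symmetric] matid Aeq ..
    also have "... = (\<Sum>i<n*n+2. (\<alpha> i + s*\<beta> i + s^2*\<gamma> i)^2)"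
      unfolding sqnorm_vec_def \<alpha>_def \<beta>_def \<gamma>_def by (simp add: Am_def add.assoc)
    finally show ?thesis .
  qed
  have Lr1: "L $$ (r,b) = V $$ (r,b)" if "b < r" for b
  proof -
    have "L $$ (r,b) = (\<Sum>l<r. X$$(r,l) * V$$(b,l)) + (\<Sum>l<r. V$$(r,l) * X$$(b,l))"
      using Lidx that rn by simp
    also have "(\<Sum>l<r. X$$(r,l) * V$$(b,l)) = 0" using rn unfolding X_def by (intro sum.neutral) auto
    also have "(\<Sum>l<r. V$$(r,l) * X$$(b,l)) = (\<Sum>l<r. if l = b then V$$(r,b) else 0)"
      using rn that unfolding X_def by (intro sum.cong refl) auto
    also have "... = V$$(r,b)" using that by (simp add: sum.delta)
    finally show ?thesis by simp
  qed
  have Lr2: "L $$ (b,r) = V $$ (r,b)" if "b < r" for b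
  proof -
    have "L $$ (b,r) = (\<Sum>l<r. X$$(b,l) * V$$(r,l)) + (\<Sum>l<r. V$$(b,l) * X$$(r,l))"
      using Lidx that rn by simp
    also have "(\<Sum>l<r. V$$(b,l) * X$$(r,l)) = 0" using rn unfolding X_def by (intro sum.neutral) auto
    also have "(\<Sum>l<r. X$$(b,l) * V$$(r,l)) = (\<Sum>l<r. if l = b then V$$(r,b) else 0)"
      using rn that unfolding X_def by (intro sum.cong refl) auto
    also have "... = V$$(r,b)" using that by (simp add: sum.delta)
    finally show ?thesis by simp
  qed
  have Lrr: "L $$ (r,r) = 0"
  proof -
    have "L $$ (r,r) = (\<Sum>l<r. X$$(r,l) * V$$(r,l)) + (\<Sum>l<r. V$$(r,l) * X$$(r,l))"
      using Lidx rn by simp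
    also have "... = 0" using rn unfolding X_def by (simp add: sum.neutral)
    finally show ?thesis .
  qed
  have Wrr: "W $$ (r,r) = (\<Sum>l<r. V$$(r,l) * V$$(r,l))" using Widx rn by simp
  have g: "(\<Sum>i<n*n+2. \<alpha> i * \<beta> i) = 0"
  proof -
    have "(\<Sum>i<n*n+2. \<alpha> i * \<beta> i) = Bf n k r e L"
      unfolding \<alpha>_def \<beta>_def using inner_Am[OF k1 kr rn] .
    also have "... = 0" unfolding e_def Bf_em[OF k1 kr rn] Lrr by simp
    finally show ?thesis .
  qed
  define c where "c a b = (if a = b then 1 else 1 + dl k)" for a b :: nat
  define gg where "gg a b = c a b * (L$$(a,b) * L$$(a,b))" for a b
  have dpos: "0 < dl k" using dl_bounds[OF k1] by simp
  have gg0: "0 \<le> gg a b" for a b unfolding gg_def c_def using dpos by simp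
  have BLL: "Bf n k r L L = (\<Sum>a<n. \<Sum>b<n. gg a b)"
    unfolding Bf_def gg_def c_def Lrr by (simp add: mult.assoc)
  define Q where "Q = (\<Sum>l<r. V$$(r,l) * V$$(r,l))"
  have low: "2 * (1 + dl k) * Q \<le> (\<Sum>a<n. \<Sum>b<n. gg a b)"
  proof -
    define hf where "hf a = (if a = r then (\<Sum>b<r. gg r b) else 0) + (if a < r then gg a r else 0)" for a
    have "hf a \<le> (\<Sum>b<n. gg a b)" if "a < n" for a
    proof (cases "a = r")
      case True
      then have "hf a = (\<Sum>b<r. gg r b)" unfolding hf_def by simp
      also have "... \<le> (\<Sum>b<n. gg r b)" using rn gg0 by (intro sum_mono2) auto
      finally show ?thesis using True by simp
    next
      case False
      show ?thesis
      proof (cases "a < r")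
        case True
        then have "hf a = gg a r" using False unfolding hf_def by simp
        also have "... \<le> (\<Sum>b<n. gg a b)" using rn gg0 by (intro member_le_sum) auto
        finally show ?thesis .
      next
        case False2: False
        then have "hf a = 0" using False unfolding hf_def by simp
        then show ?thesis using gg0 by (simp add: sum_nonneg)
      qed
    qed
    then have "(\<Sum>a<n. hf a) \<le> (\<Sum>a<n. \<Sum>b<n. gg a b)" by (intro sum_mono) auto
    moreover have "(\<Sum>a<n. hf a) = 2 * (1 + dl k) * Q"
    proof -
      have "(\<Sum>a<n. hf a) = (\<Sum>a<n. if a = r then (\<Sum>b<r. gg r b) else 0) + (\<Sum>a<n. if a < r then gg a r else 0)"
        unfolding hf_def by (simp add: sum.distrib)
      also have "(\<Sum>a<n. if a = r then (\<Sum>b<r. gg r b) else 0) = (\<Sum>b<r. gg r b)"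
        using rn by (simp add: sum.delta)
      also have "(\<Sum>a<n. if a < r then gg a r else 0) = (\<Sum>a<r. if a < r then gg a r else 0) + (\<Sum>a\<in>{r..<n}. if a < r then gg a r else 0)"
        using rn by (intro split_sum) simp
      also have "(\<Sum>a\<in>{r..<n}. if a < r then gg a r else 0) = 0" by (intro sum.neutral) auto
      also have "(\<Sum>a<r. if a < r then gg a r else 0) = (\<Sum>a<r. (1 + dl k) * (V$$(r,a) * V$$(r,a)))"
        by (intro sum.cong refl) (auto simp: gg_def c_def Lr2)
      also have "(\<Sum>b<r. gg r b) = (\<Sum>a<r. (1 + dl k) * (V$$(r,a) * V$$(r,a)))"
        by (intro sum.cong refl) (auto simp: gg_def c_def Lr1)
      finally have "(\<Sum>a<n. hf a) = (\<Sum>a<r. (1 + dl k) * (V$$(r,a) * V$$(r,a))) + (\<Sum>a<r. (1 + dl k) * (V$$(r,a) * V$$(r,a)))" by simp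
      moreover have "(\<Sum>a<r. (1 + dl k) * (V$$(r,a) * V$$(r,a))) = (1 + dl k) * Q"
        unfolding Q_def by (simp add: sum_distrib_left)
      ultimately show ?thesis by simp
    qed
    ultimately show ?thesis by simp
  qed
  have hpos: "0 \<le> (\<Sum>i<n*n+2. (\<beta> i)^2 + 2*\<alpha> i*\<gamma> i)"
  proof -
    have "(\<Sum>i<n*n+2. (\<beta> i)^2 + 2*\<alpha> i*\<gamma> i) = (\<Sum>i<n*n+2. \<beta> i * \<beta> i) + 2 * (\<Sum>i<n*n+2. \<alpha> i * \<gamma> i)"
      by (simp add: sum.distrib sum_distrib_left power2_eq_square mult.assoc)
    also have "... = Bf n k r L L + 2 * Bf n k r e W"
      unfolding \<alpha>_def \<beta>_def \<gamma>_def using inner_Am[OF k1 kr rn] by simp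
    also have "Bf n k r e W = - (1 + dl k) * Q" unfolding e_def Bf_em[OF k1 kr rn] Wrr Q_def ..
    finally have eqh: "(\<Sum>i<n*n+2. (\<beta> i)^2 + 2*\<alpha> i*\<gamma> i) = Bf n k r L L + 2 * (- (1 + dl k) * Q)" .
    have t: "Bf n k r L L + 2 * (- (1 + dl k) * Q) = Bf n k r L L - 2 * (1 + dl k) * Q" by (simp add: algebra_simps)
    show ?thesis using eqh t low BLL by linarith
  qed
  show "\<exists>\<alpha> \<beta> \<gamma> :: nat \<Rightarrow> real.
     (\<forall>s. fA (Am n k r) (Zm n k r) (Xm n r + s \<cdot>\<^sub>m V) = (\<Sum>i<n*n+2. (\<alpha> i + s*\<beta> i + s^2*\<gamma> i)^2))
     \<and> (\<Sum>i<n*n+2. \<alpha> i * \<beta> i) = 0 \<and> 0 \<le> (\<Sum>i<n*n+2. (\<beta> i)^2 + 2*\<alpha> i*\<gamma> i)"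
    using fAeq g hpos by blast
qed


lemma cz_pos: "1 \<le> k \<Longrightarrow> 0 < cz k"
  unfolding cz_def sk_def by (simp add: add_pos_nonneg)

lemma mrank_Zm:
  assumes k1: "1 \<le> k" and kr: "k \<le> r" and rn: "r < n"
  shows "mrank (Zm n k r) = r - k + 1"
proof -
  interpret vec_space "TYPE(real)" n .
  define v0 :: "real vec" where "v0 = vec n (\<lambda>i. if i = r then cz k else 0)"
  have colZ: "col (Zm n k r) l = (if k \<le> l then unit_vec n l else v0)" if "l < r" for l
    using that unfolding Zm_def v0_def unit_vec_def by auto
  have setc: "set (cols (Zm n k r)) = insert v0 (unit_vec n ` {k..<r})"
  proof
    show "set (cols (Zm n k r)) \<subseteq> insert v0 (unit_vec n ` {k..<r})"
    proof
      fix x assume "x \<in> set (cols (Zm n k r))"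
      then obtain l where l: "l < r" "x = col (Zm n k r) l" unfolding cols_def by auto
      then show "x \<in> insert v0 (unit_vec n ` {k..<r})" using colZ[OF l(1)] by (auto split: if_splits)
    qed
    show "insert v0 (unit_vec n ` {k..<r}) \<subseteq> set (cols (Zm n k r))"
    proof
      fix x assume "x \<in> insert v0 (unit_vec n ` {k..<r})"
      then consider "x = v0" | l where "l \<in> {k..<r}" "x = unit_vec n l" by auto
      then show "x \<in> set (cols (Zm n k r))"
      proof cases
        case 1
        have "col (Zm n k r) 0 = v0" using colZ[of 0] k1 kr by simp
        then show ?thesis using 1 k1 kr unfolding cols_def by (auto intro!: image_eqI[of _ _ 0])
      next
        case 2
        have "col (Zm n k r) l = unit_vec n l" using colZ[of l] 2 by simp
        then show ?thesis using 2 unfolding cols_def by (auto intro!: image_eqI[of _ _ l])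
      qed
    qed
  qed
  have v0r: "v0 $ r = cz k" using rn unfolding v0_def by simp
  have v0l: "v0 $ l = 0" if "l < n" "l \<noteq> r" for l using that unfolding v0_def by simp
  have czp: "cz k \<noteq> 0" using cz_pos[OF k1] by simp
  have notin: "v0 \<notin> unit_vec n ` {k..<r}"
  proof
    assume "v0 \<in> unit_vec n ` {k..<r}"
    then obtain l where "l \<in> {k..<r}" "v0 = unit_vec n l" by auto
    then have "v0 $ r = 0" using rn by simp
    then show False using v0r czp by simp
  qed
  have inj: "inj_on (unit_vec n :: nat \<Rightarrow> real vec) {k..<r}"
    using rn by (auto simp: inj_on_def)
  have card: "card (set (cols (Zm n k r))) = r - k + 1"
    unfolding setc using notin inj kr by (simp add: card_image)
  have carr: "set (cols (Zm n k r)) \<subseteq> carrier_vec n"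
    unfolding setc v0_def using rn by auto
  have indpt: "lin_indpt (set (cols (Zm n k r)))"
  proof (rule coord_indpt[OF carr])
    fix v assume "v \<in> set (cols (Zm n k r))"
    then consider "v = v0" | l where "l \<in> {k..<r}" "v = unit_vec n l" unfolding setc by auto
    then show "\<exists>i<n. v $ i \<noteq> 0 \<and> (\<forall>u\<in>set (cols (Zm n k r)). u \<noteq> v \<longrightarrow> u $ i = 0)"
    proof cases
      case 1
      show ?thesis
      proof (intro exI[of _ r] conjI ballI impI)
        show "r < n" by (rule rn)
        show "v $ r \<noteq> 0" using 1 v0r czp by simp
        fix u assume "u \<in> set (cols (Zm n k r))" "u \<noteq> v"
        then obtain l where "l \<in> {k..<r}" "u = unit_vec n l" using 1 unfolding setc by auto
        then show "u $ r = 0" using rn by simp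
      qed
    next
      case 2
      then have ln: "l < n" "l < r" using rn by auto
      show ?thesis
      proof (intro exI[of _ l] conjI ballI impI)
        show "l < n" by (rule ln)
        show "v $ l \<noteq> 0" using 2 ln by simp
        fix u assume u: "u \<in> set (cols (Zm n k r))" "u \<noteq> v"
        then consider "u = v0" | l' where "l' \<in> {k..<r}" "u = unit_vec n l'" unfolding setc by auto
        then show "u $ l = 0"
        proof cases
          case 1 then show ?thesis using v0l[of l] ln by simp
        next
          case 3: 2
          then have "l' \<noteq> l" using u(2) 2 by auto
          then show ?thesis using 3 ln rn by simp
        qed
      qed
    qed
  qed
  have max: "maximal (set (cols (Zm n k r))) (\<lambda>T. T \<subseteq> set (cols (Zm n k r)) \<and> lin_indpt T)"
    unfolding maximal_def using indpt by auto
  have "rank (Zm n k r) = card (set (cols (Zm n k r)))"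
    by (rule rank_card_indpt[OF Zm_carrier max])
  then show ?thesis unfolding mrank_def using card by simp
qed

theorem proposition8:
  fixes r rs n :: nat
  assumes "1 \<le> rs" and "rs \<le> r" and "r < n"
  shows "\<exists>X \<in> carrier_mat n r. \<exists>Z \<in> carrier_mat n r.
           mrank Z = rs \<and> X * transpose_mat X \<noteq> Z * transpose_mat Z \<and>
           thr_delta n r X Z \<le> ereal (1 / (1 + 1 / sqrt (real (r - rs + 1))))"
proof -
  define k where "k = r - rs + 1"
  have k1: "1 \<le> k" unfolding k_def by simp
  have kr: "k \<le> r" unfolding k_def using assms by simp
  have rn: "r < n" using assms by simp
  have rk: "r - k + 1 = rs" unfolding k_def using assms by simp
  have mr: "mrank (Zm n k r) = rs" using mrank_Zm[OF k1 kr rn] rk by simp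
  have neq: "Xm n r * transpose_mat (Xm n r) \<noteq> Zm n k r * transpose_mat (Zm n k r)"
  proof
    assume eq: "Xm n r * transpose_mat (Xm n r) = Zm n k r * transpose_mat (Zm n k r)"
    have "(Xm n r * transpose_mat (Xm n r)) $$ (r,r) = 0" using XXt_index[OF rn rn, of r] by simp
    moreover have "(Zm n k r * transpose_mat (Zm n k r)) $$ (r,r) = 1 + sk k"
      using ZZt_index[OF k1 kr rn rn] by simp
    moreover have "0 \<le> sk k" by (simp add: sk_def)
    ultimately show False using eq by simp
  qed
  have mem: "dl k \<in> {\<delta>. \<exists>m\<ge>1. \<exists>A. linear_meas n m A \<and>
        RIP n A \<delta> (r + mrank (Zm n k r)) \<and> sec_order_crit n r A (Zm n k r) (Xm n r)}"
    using Am_linear[OF kr rn] RIP_Am[OF k1 kr rn] soc_main[OF k1 kr rn]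
    by (intro CollectI exI[of _ "n*n+2"] conjI exI[of _ "Am n k r"]) auto
  have thr: "thr_delta n r (Xm n r) (Zm n k r) \<le> ereal (dl k)"
    unfolding thr_delta_def by (rule Inf_lower) (use mem in blast)
  have dlv: "dl k = 1 / (1 + 1 / sqrt (real (r - rs + 1)))"
  proof -
    have "sk k > 0" using sk_pos[OF k1] .
    then show ?thesis unfolding dl_def k_def[symmetric] sk_def[symmetric] by (simp add: field_simps)
  qed
  show ?thesis
    using mr neq thr dlv by (intro bexI[of _ "Xm n r"] bexI[of _ "Zm n k r"]) auto
qed

end
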